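(* (a) There exists a constant $c_1$ such that for every $n$ and every configuration of $n$ points in the square $[0,n^{1/2}]^2$, the minimal spanning tree $\hat T_n$ of the complete graph on these points with Euclidean edge lengths satisfies $\mathrm{len}(\hat T_n)\le c_1 n$. (b) For all sufficiently large $n$, if $T_n$ is the MST of $n$ independent uniform points in $[0,n^{1/2}]^2$ (Euclidean complete graph), there exists a spanning tree $T_n''$ on the same points with $\mathrm{len}(T_n'')\le 12c_1 n$ and $n^{-1}|T_n''\setminus T_n|\ge 1/2$.
   Context: Spanning trees are identified with their edge sets; $\mathrm{len}(T)$ is the sum of the Euclidean lengths of its edges; $T''\setminus T$ denotes the edges of $T''$ not in $T$. *)

theory Defs
  imports "HOL-Probability.Probability"
begin

text \<open>Points are indexed by 0..<n (so coincident points are allowed);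
an edge of the complete graph is a pair (i,j) with i < j < n.\<close>

definition cg_edges :: "nat \<Rightarrow> (nat \<times> nat) set" where
  "cg_edges n = {(i,j). i < j \<and> j < n}"

definition graph_connected :: "nat \<Rightarrow> (nat \<times> nat) set \<Rightarrow> bool" where
  "graph_connected n T \<longleftrightarrow>
     (\<forall>i<n. \<forall>j<n. (i, j) \<in> (T \<union> T\<inverse>)\<^sup>*)"

definition spanning_tree :: "nat \<Rightarrow> (nat \<times> nat) set \<Rightarrow> bool" where
  "spanning_tree n T \<longleftrightarrow> T \<subseteq> cg_edges n \<and> graph_connected n T \<and>
     (\<forall>e\<in>T. \<not> graph_connected n (T - {e}))"

definition tree_len :: "(nat \<Rightarrow> real^2) \<Rightarrow> (nat \<times> nat) set \<Rightarrow> real" where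
  "tree_len x T = (\<Sum>(i,j)\<in>T. dist (x i) (x j))"

definition is_MST :: "nat \<Rightarrow> (nat \<Rightarrow> real^2) \<Rightarrow> (nat \<times> nat) set \<Rightarrow> bool" where
  "is_MST n x T \<longleftrightarrow> spanning_tree n T \<and>
     (\<forall>T'. spanning_tree n T' \<longrightarrow> tree_len x T \<le> tree_len x T')"

definition in_square :: "nat \<Rightarrow> (nat \<Rightarrow> real^2) \<Rightarrow> bool" where
  "in_square n x \<longleftrightarrow> (\<forall>i<n. \<forall>k. 0 \<le> x i $ k \<and> x i $ k \<le> sqrt (real n))"

definition unif_points :: "nat \<Rightarrow> (nat \<Rightarrow> real^2) measure" where
  "unif_points n = PiM {0..<n}
     (\<lambda>_. uniform_measure lborel (cbox (0::real^2) (\<chi> k. sqrt (real n))))"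

end

theory Submission
  imports Defs
begin

definition cls :: "(nat \<times> nat) set \<Rightarrow> nat \<Rightarrow> nat set" where
  "cls E i = {j. (i,j) \<in> (E \<union> E\<inverse>)\<^sup>*}"

definition comps :: "nat \<Rightarrow> (nat \<times> nat) set \<Rightarrow> nat" where
  "comps n E = card (cls E ` {..<n})"

lemma sym_reach: "(i,j) \<in> (E \<union> E\<inverse>)\<^sup>* \<Longrightarrow> (j,i) \<in> (E \<union> E\<inverse>)\<^sup>*"
  by (metis converse_Un converse_converse rtrancl_converseI sup_commute)

lemma cls_eq_iff: "cls E i = cls E j \<longleftrightarrow> (i,j) \<in> (E \<union> E\<inverse>)\<^sup>*"
proof
  assume "cls E i = cls E j"
  moreover have "j \<in> cls E j" by (simp add: cls_def)
  ultimately have "j \<in> cls E i" by simp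
  then show "(i,j) \<in> (E \<union> E\<inverse>)\<^sup>*" by (simp add: cls_def)
next
  assume h: "(i,j) \<in> (E \<union> E\<inverse>)\<^sup>*"
  then have h2: "(j,i) \<in> (E \<union> E\<inverse>)\<^sup>*" by (rule sym_reach)
  show "cls E i = cls E j"
    unfolding cls_def using h h2 by (auto intro: rtrancl_trans)
qed

lemma reach_insert:
  fixes E :: "(nat \<times> nat) set"
  defines "S \<equiv> E \<union> E\<inverse>"
  shows "(i,j) \<in> (insert (u,v) E \<union> (insert (u,v) E)\<inverse>)\<^sup>* \<longleftrightarrow>
    (i,j) \<in> S\<^sup>* \<or> ((i,u) \<in> S\<^sup>* \<and> (v,j) \<in> S\<^sup>*) \<or> ((i,v) \<in> S\<^sup>* \<and> (u,j) \<in> S\<^sup>*)"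
proof
  assume "(i,j) \<in> (insert (u,v) E \<union> (insert (u,v) E)\<inverse>)\<^sup>*"
  then show "(i,j) \<in> S\<^sup>* \<or> ((i,u) \<in> S\<^sup>* \<and> (v,j) \<in> S\<^sup>*) \<or> ((i,v) \<in> S\<^sup>* \<and> (u,j) \<in> S\<^sup>*)"
  proof (induction rule: rtrancl_induct)
    case base then show ?case by simp
  next
    case (step y z)
    have yz: "(y,z) \<in> S \<or> (y,z) = (u,v) \<or> (y,z) = (v,u)" using step.hyps(2) by (auto simp: S_def)
    have sy: "\<And>a b. (a,b) \<in> S\<^sup>* \<Longrightarrow> (b,a) \<in> S\<^sup>*" unfolding S_def by (rule sym_reach)
    from yz show ?case
    proof (elim disjE)
      assume "(y,z) \<in> S"
      then show ?case using step.IH by (meson rtrancl.rtrancl_into_rtrancl)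
    next
      assume "(y,z) = (u,v)"
      then have "y = u" "z = v" by auto
      then show ?case using step.IH sy by (meson rtrancl.rtrancl_refl rtrancl_trans)
    next
      assume "(y,z) = (v,u)"
      then have "y = v" "z = u" by auto
      then show ?case using step.IH sy by (meson rtrancl.rtrancl_refl rtrancl_trans)
    qed
  qed
next
  let ?S' = "insert (u,v) E \<union> (insert (u,v) E)\<inverse>"
  have sub: "S \<subseteq> ?S'" by (auto simp: S_def)
  have sub2: "S\<^sup>* \<subseteq> ?S'\<^sup>*" using sub by (rule rtrancl_mono)
  have uv: "(u,v) \<in> ?S'\<^sup>*" "(v,u) \<in> ?S'\<^sup>*" by auto
  assume "(i,j) \<in> S\<^sup>* \<or> ((i,u) \<in> S\<^sup>* \<and> (v,j) \<in> S\<^sup>*) \<or> ((i,v) \<in> S\<^sup>* \<and> (u,j) \<in> S\<^sup>*)"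
  then show "(i,j) \<in> ?S'\<^sup>*" using sub2 uv by (meson rtrancl_trans subsetD)
qed

lemma cls_insert:
  fixes E :: "(nat \<times> nat) set"
  defines "S \<equiv> E \<union> E\<inverse>"
  shows "cls (insert (u,v) E) i =
     (if (i,u) \<in> S\<^sup>* \<or> (i,v) \<in> S\<^sup>* then cls E u \<union> cls E v else cls E i)"
proof -
  have sy: "\<And>a b. (a,b) \<in> S\<^sup>* \<Longrightarrow> (b,a) \<in> S\<^sup>*" unfolding S_def by (rule sym_reach)
  have tr: "\<And>a b c. (a,b) \<in> S\<^sup>* \<Longrightarrow> (b,c) \<in> S\<^sup>* \<Longrightarrow> (a,c) \<in> S\<^sup>*" by (rule rtrancl_trans)
  have R: "\<And>j. j \<in> cls (insert (u,v) E) i \<longleftrightarrow>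
    (i,j) \<in> S\<^sup>* \<or> ((i,u) \<in> S\<^sup>* \<and> (v,j) \<in> S\<^sup>*) \<or> ((i,v) \<in> S\<^sup>* \<and> (u,j) \<in> S\<^sup>*)"
    unfolding cls_def S_def mem_Collect_eq by (rule reach_insert)
  have C: "\<And>a j. j \<in> cls E a \<longleftrightarrow> (a,j) \<in> S\<^sup>*" unfolding cls_def S_def by simp
  show ?thesis
  proof (cases "(i,u) \<in> S\<^sup>*")
    case T1: True
    have "j \<in> cls (insert (u,v) E) i \<longleftrightarrow> j \<in> cls E u \<union> cls E v" for j
    proof
      assume "j \<in> cls (insert (u,v) E) i"
      then consider "(i,j) \<in> S\<^sup>*" | "(v,j) \<in> S\<^sup>*" | "(u,j) \<in> S\<^sup>*" using R by blast
      then show "j \<in> cls E u \<union> cls E v"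
      proof cases
        case 1 then have "(u,j) \<in> S\<^sup>*" using sy[OF T1] tr by blast
        then show ?thesis using C by blast
      qed (use C in blast)+
    next
      assume "j \<in> cls E u \<union> cls E v"
      then consider "(u,j) \<in> S\<^sup>*" | "(v,j) \<in> S\<^sup>*" using C by blast
      then show "j \<in> cls (insert (u,v) E) i"
      proof cases
        case 1 then have "(i,j) \<in> S\<^sup>*" using T1 tr by blast
        then show ?thesis using R by blast
      next
        case 2 then show ?thesis using R T1 by blast
      qed
    qed
    then show ?thesis using T1 by auto
  next
    case F1: False
    show ?thesis
    proof (cases "(i,v) \<in> S\<^sup>*")
      case T2: True
      have "j \<in> cls (insert (u,v) E) i \<longleftrightarrow> j \<in> cls E u \<union> cls E v" for j
      proof
        assume "j \<in> cls (insert (u,v) E) i"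
        then consider "(i,j) \<in> S\<^sup>*" | "(u,j) \<in> S\<^sup>*" using R F1 by blast
        then show "j \<in> cls E u \<union> cls E v"
        proof cases
          case 1 then have "(v,j) \<in> S\<^sup>*" using sy[OF T2] tr by blast
          then show ?thesis using C by blast
        qed (use C in blast)
      next
        assume "j \<in> cls E u \<union> cls E v"
        then consider "(u,j) \<in> S\<^sup>*" | "(v,j) \<in> S\<^sup>*" using C by blast
        then show "j \<in> cls (insert (u,v) E) i"
        proof cases
          case 2 then have "(i,j) \<in> S\<^sup>*" using T2 tr by blast
          then show ?thesis using R by blast
        next
          case 1 then show ?thesis using R T2 by blast
        qed
      qed
      then show ?thesis using T2 by auto
    next
      case False
      have "j \<in> cls (insert (u,v) E) i \<longleftrightarrow> j \<in> cls E i" for j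
        using R C F1 False by blast
      then show ?thesis using F1 False by auto
    qed
  qed
qed

lemma comps_insert:
  fixes E :: "(nat \<times> nat) set"
  assumes "u < n" "v < n"
  shows "comps n E \<le> comps n (insert (u,v) E) + 1"
    and "(u,v) \<notin> (E \<union> E\<inverse>)\<^sup>* \<Longrightarrow> comps n E = comps n (insert (u,v) E) + 1"
proof -
  let ?S = "E \<union> E\<inverse>"
  let ?V = "{..<n}"
  let ?A = "cls E ` ?V"
  have fin: "finite ?A" by simp
  have ci: "\<And>i. cls (insert (u,v) E) i =
     (if (i,u) \<in> ?S\<^sup>* \<or> (i,v) \<in> ?S\<^sup>* then cls E u \<union> cls E v else cls E i)"
    by (rule cls_insert)
  have sy: "\<And>a b. (a,b) \<in> ?S\<^sup>* \<Longrightarrow> (b,a) \<in> ?S\<^sup>*" by (rule sym_reach)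
  have case1: "cls (insert (u,v) E) ` ?V = ?A" if uv: "(u,v) \<in> ?S\<^sup>*"
  proof -
    have "cls (insert (u,v) E) i = cls E i" for i
    proof (cases "(i,u) \<in> ?S\<^sup>* \<or> (i,v) \<in> ?S\<^sup>*")
      case True
      then have "cls E i = cls E u" "cls E i = cls E v"
        using uv sy cls_eq_iff by (metis rtrancl_trans)+
      then show ?thesis using ci True by simp
    next
      case False then show ?thesis using ci by simp
    qed
    then show ?thesis by simp
  qed
  have case2: "cls (insert (u,v) E) ` ?V = insert (cls E u \<union> cls E v) (?A - {cls E u, cls E v})
      \<and> cls E u \<union> cls E v \<notin> (?A - {cls E u, cls E v}) \<and> cls E u \<noteq> cls E v"
    if nuv: "(u,v) \<notin> ?S\<^sup>*"
  proof (intro conjI)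
    show ne: "cls E u \<noteq> cls E v" using nuv cls_eq_iff by metis
    show "cls E u \<union> cls E v \<notin> (?A - {cls E u, cls E v})"
    proof
      assume "cls E u \<union> cls E v \<in> ?A - {cls E u, cls E v}"
      then obtain i where i: "cls E u \<union> cls E v = cls E i" "cls E i \<noteq> cls E u" by auto
      have "u \<in> cls E u" by (simp add: cls_def)
      then have "u \<in> cls E i" using i by auto
      then have "(i,u) \<in> ?S\<^sup>*" by (simp add: cls_def)
      then show False using i cls_eq_iff by metis
    qed
    show "cls (insert (u,v) E) ` ?V = insert (cls E u \<union> cls E v) (?A - {cls E u, cls E v})"
    proof
      show "cls (insert (u,v) E) ` ?V \<subseteq> insert (cls E u \<union> cls E v) (?A - {cls E u, cls E v})"
      proof
        fix C assume "C \<in> cls (insert (u,v) E) ` ?V"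
        then obtain i where i: "i < n" "C = cls (insert (u,v) E) i" by auto
        show "C \<in> insert (cls E u \<union> cls E v) (?A - {cls E u, cls E v})"
        proof (cases "(i,u) \<in> ?S\<^sup>* \<or> (i,v) \<in> ?S\<^sup>*")
          case True then show ?thesis using ci i by simp
        next
          case False
          then have "cls E i \<noteq> cls E u" "cls E i \<noteq> cls E v" using cls_eq_iff by metis+
          then show ?thesis using ci i False by auto
        qed
      qed
    next
      show "insert (cls E u \<union> cls E v) (?A - {cls E u, cls E v}) \<subseteq> cls (insert (u,v) E) ` ?V"
      proof
        fix C assume C: "C \<in> insert (cls E u \<union> cls E v) (?A - {cls E u, cls E v})"
        show "C \<in> cls (insert (u,v) E) ` ?V"
        proof (cases "C = cls E u \<union> cls E v")
          case True
          then have "C = cls (insert (u,v) E) u" using ci[of u] by simp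
          then show ?thesis using assms by auto
        next
          case False
          then obtain i where i: "i < n" "C = cls E i" "cls E i \<noteq> cls E u" "cls E i \<noteq> cls E v"
            using C by auto
          then have "\<not> ((i,u) \<in> ?S\<^sup>* \<or> (i,v) \<in> ?S\<^sup>*)" using cls_eq_iff by metis
          then have "C = cls (insert (u,v) E) i" using ci[of i] i by simp
          then show ?thesis using i by auto
        qed
      qed
    qed
  qed
  have inA: "cls E u \<in> ?A" "cls E v \<in> ?A" using assms by auto
  show "comps n E \<le> comps n (insert (u,v) E) + 1"
  proof (cases "(u,v) \<in> ?S\<^sup>*")
    case True then show ?thesis using case1 by (simp add: comps_def)
  next
    case False
    note c = case2[OF False]
    have "card {cls E u, cls E v} \<le> card ?A" using inA fin by (intro card_mono) auto
    then have ge2: "card ?A \<ge> 2" using c by simp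
    have "card (?A - {cls E u, cls E v}) = card ?A - 2" using inA c fin by (simp add: card_Diff_subset)
    then show ?thesis using c fin ge2 by (simp add: comps_def)
  qed
  assume nuv: "(u,v) \<notin> ?S\<^sup>*"
  note c = case2[OF nuv]
  have "card {cls E u, cls E v} \<le> card ?A" using inA fin by (intro card_mono) auto
  then have ge2: "card ?A \<ge> 2" using c by simp
  have "card (?A - {cls E u, cls E v}) = card ?A - 2" using inA c fin by (simp add: card_Diff_subset)
  then show "comps n E = comps n (insert (u,v) E) + 1" using c fin ge2 by (simp add: comps_def)
qed


lemma comps_empty: "comps n {} = n"
proof -
  have "cls {} i = {i}" for i by (auto simp: cls_def)
  then have "cls {} ` {..<n} = (\<lambda>i. {i}) ` {..<n}" by simp
  moreover have "card ((\<lambda>i. {i}) ` {..<n}) = n" by (subst card_image) (auto simp: inj_on_def)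
  ultimately show ?thesis by (simp add: comps_def)
qed

lemma cg_edges_finite: "finite (cg_edges n)"
  by (rule finite_subset[of _ "{..<n} \<times> {..<n}"]) (auto simp: cg_edges_def)

lemma comps_card_ge:
  assumes "finite E" "E \<subseteq> cg_edges n"
  shows "n \<le> comps n E + card E"
  using assms
proof (induction E rule: finite_induct)
  case empty then show ?case by (simp add: comps_empty)
next
  case (insert e F)
  obtain u v where e: "e = (u,v)" by force
  have "u < n" "v < n" using insert.prems e by (auto simp: cg_edges_def)
  then have "comps n F \<le> comps n (insert e F) + 1" using comps_insert(1) e by simp
  then show ?case using insert by simp
qed

lemma comps_card_eq:
  assumes "finite T" "T \<subseteq> cg_edges n"
    and br: "\<And>u v. (u,v) \<in> T \<Longrightarrow> (u,v) \<notin> ((T - {(u,v)}) \<union> (T - {(u,v)})\<inverse>)\<^sup>*"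
    and "F \<subseteq> T"
  shows "comps n F + card F = n"
proof -
  have "finite F" using assms(1,4) finite_subset by blast
  then show ?thesis using assms(4)
proof (induction F rule: finite_subset_induct')
  case empty then show ?case by (simp add: comps_empty)
next
  case (insert e F)
  obtain u v where e: "e = (u,v)" by force
  have "u < n" "v < n" using insert e assms(2) by (auto simp: cg_edges_def)
  have "F \<subseteq> T - {(u,v)}" using insert e by auto
  then have "(F \<union> F\<inverse>)\<^sup>* \<subseteq> ((T - {(u,v)}) \<union> (T - {(u,v)})\<inverse>)\<^sup>*"
    by (intro rtrancl_mono) auto
  then have "(u,v) \<notin> (F \<union> F\<inverse>)\<^sup>*" using br[of u v] insert e by auto
  then have "comps n F = comps n (insert e F) + 1" using comps_insert(2) e \<open>u<n\<close> \<open>v<n\<close> by simp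
  then show ?case using insert by simp
qed
qed

lemma comps_connected:
  assumes "graph_connected n E" "n \<ge> 1"
  shows "comps n E = 1"
proof -
  have eq: "cls E i = cls E 0" if "i < n" for i
  proof -
    have "(i,0) \<in> (E \<union> E\<inverse>)\<^sup>*" using assms that unfolding graph_connected_def by simp
    then show ?thesis by (simp only: cls_eq_iff)
  qed
  have s1: "cls E ` {..<n} \<subseteq> {cls E 0}"
  proof (rule subsetI)
    fix C assume "C \<in> cls E ` {..<n}"
    then obtain i where i: "i < n" "C = cls E i" by blast
    show "C \<in> {cls E 0}" using eq[OF i(1)] i(2) by blast
  qed
  have "cls E 0 \<in> cls E ` {..<n}" using assms(2) by simp
  then have "cls E ` {..<n} = {cls E 0}" using s1 by blast
  then show ?thesis by (simp add: comps_def)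
qed

lemma connected_card:
  assumes "graph_connected n E" "E \<subseteq> cg_edges n" "n \<ge> 1"
  shows "n - 1 \<le> card E"
proof -
  have "finite E" using assms(2) cg_edges_finite finite_subset by blast
  then show ?thesis using comps_card_ge[OF _ assms(2)] comps_connected[OF assms(1,3)] by simp
qed

lemma tree_card:
  assumes "spanning_tree n T" "n \<ge> 1"
  shows "card T \<le> n - 1"
proof -
  have sub: "T \<subseteq> cg_edges n" and con: "graph_connected n T"
    and min: "\<forall>e\<in>T. \<not> graph_connected n (T - {e})"
    using assms unfolding spanning_tree_def by auto
  have fin: "finite T" using sub cg_edges_finite finite_subset by blast
  have br: "(u,v) \<notin> ((T - {(u,v)}) \<union> (T - {(u,v)})\<inverse>)\<^sup>*" if uv: "(u,v) \<in> T" for u v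
  proof
    let ?R = "(T - {(u,v)}) \<union> (T - {(u,v)})\<inverse>"
    assume h: "(u,v) \<in> ?R\<^sup>*"
    have h2: "(v,u) \<in> ?R\<^sup>*" using h by (rule sym_reach)
    have "T \<union> T\<inverse> \<subseteq> ?R\<^sup>*"
    proof
      fix z assume z: "z \<in> T \<union> T\<inverse>"
      show "z \<in> ?R\<^sup>*"
      proof (cases "z = (u,v) \<or> z = (v,u)")
        case True then show ?thesis using h h2 by auto
      next
        case False then have "z \<in> ?R" using z by auto
        then show ?thesis by (rule r_into_rtrancl)
      qed
    qed
    then have "(T \<union> T\<inverse>)\<^sup>* \<subseteq> ?R\<^sup>*" by (rule rtrancl_subset_rtrancl)
    then have "graph_connected n (T - {(u,v)})" using con unfolding graph_connected_def by blast
    then show False using min uv by blast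
  qed
  have "comps n T + card T = n" using comps_card_eq[OF fin sub br] by blast
  then show ?thesis using comps_connected[OF con assms(2)] by simp
qed

lemma exists_subtree:
  assumes "finite P" "P \<subseteq> cg_edges n" "graph_connected n P"
  shows "\<exists>S\<subseteq>P. spanning_tree n S"
proof -
  have "P \<subseteq> P \<and> graph_connected n P" using assms by simp
  from ex_has_least_nat[of "\<lambda>S. S \<subseteq> P \<and> graph_connected n S", OF this, of card]
  obtain S where S: "S \<subseteq> P \<and> graph_connected n S"
    and m: "\<forall>S'. S' \<subseteq> P \<and> graph_connected n S' \<longrightarrow> card S \<le> card S'"
    by blast
  have finS: "finite S" using S assms(1) finite_subset by blast
  have "\<not> graph_connected n (S - {e})" if "e \<in> S" for e
  proof
    assume "graph_connected n (S - {e})"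
    then have "card S \<le> card (S - {e})" using m S by blast
    moreover have "card (S - {e}) < card S" using finS that by (rule card_Diff1_less)
    ultimately show False by simp
  qed
  then have "spanning_tree n S" using S assms(2) unfolding spanning_tree_def by blast
  then show ?thesis using S by blast
qed

definition ph :: "real \<Rightarrow> real^2 \<Rightarrow> real" where
  "ph s p = 2 * s * of_int (floor (p$2)) + p$1"

lemma dist_l1: "dist (p::real^2) q \<le> \<bar>p$1 - q$1\<bar> + \<bar>p$2 - q$2\<bar>"
proof -
  have "dist p q = norm (p - q)" by (simp add: dist_norm)
  also have "\<dots> \<le> (\<Sum>i\<in>UNIV. \<bar>(p - q)$i\<bar>)" by (rule norm_le_l1_cart)
  also have "\<dots> = \<bar>p$1 - q$1\<bar> + \<bar>p$2 - q$2\<bar>" by (simp add: UNIV_2)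
  finally show ?thesis .
qed

lemma aux_lin: "s * m \<le> (D::real) \<Longrightarrow> m \<le> s * m \<Longrightarrow> s \<le> s * m \<Longrightarrow> s + (m + 1) \<le> 2 * D + 1"
  by linarith

lemma ph_dist:
  fixes p q :: "real^2"
  assumes s1: "1 \<le> s"
    and p: "\<And>k. 0 \<le> p$k \<and> p$k \<le> s" and q: "\<And>k. 0 \<le> q$k \<and> q$k \<le> s"
    and le: "ph s p \<le> ph s q"
  shows "dist p q \<le> 2 * (ph s q - ph s p) + 1"
proof -
  define kp where "kp = floor (p$2)"
  define kq where "kq = floor (q$2)"
  have kp: "of_int kp \<le> p$2" "p$2 < of_int kp + 1" unfolding kp_def by linarith+
  have kq: "of_int kq \<le> q$2" "q$2 < of_int kq + 1" unfolding kq_def by linarith+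
  have le': "2 * s * of_int kp + p$1 \<le> 2 * s * of_int kq + q$1"
    using le unfolding ph_def kp_def kq_def by simp
  have p1: "0 \<le> p$1" "p$1 \<le> s" using p by auto
  have q1: "0 \<le> q$1" "q$1 \<le> s" using q by auto
  have D: "ph s q - ph s p = 2 * s * (of_int kq - of_int kp) + (q$1 - p$1)"
    unfolding ph_def kp_def kq_def by (simp add: algebra_simps)
  show ?thesis
  proof (cases "kp = kq")
    case True
    then have "q$1 - p$1 \<ge> 0" using le' by simp
    moreover have "\<bar>p$2 - q$2\<bar> \<le> 1" using kp kq True by auto
    ultimately show ?thesis using dist_l1[of p q] D True by auto
  next
    case False
    have "kq \<ge> kp"
    proof (rule ccontr)
      assume "\<not> kq \<ge> kp"
      then have "of_int kp - of_int kq \<ge> (1::real)" by linarith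
      then have "2 * s * (of_int kp - of_int kq) \<ge> 2 * s * 1" using s1
        by (intro mult_left_mono) auto
      then show False using le' p1 q1 s1 by (simp add: algebra_simps)
    qed
    then have m1: "of_int kq - of_int kp \<ge> (1::real)" using False by linarith
    define m where "m = of_int kq - (of_int kp :: real)"
    have "s * m \<ge> 1 * m" using m1 s1 unfolding m_def by (intro mult_right_mono) auto
    moreover have "s * m \<ge> s * 1" using m1 s1 unfolding m_def by (intro mult_left_mono) auto
    ultimately have sm: "s * m \<ge> m" "s * m \<ge> s" by auto
    have dd: "ph s q - ph s p \<ge> s * m" using D sm p1 q1 unfolding m_def by (simp add: algebra_simps)
    have "\<bar>p$2 - q$2\<bar> \<le> m + 1" using kp kq m1 unfolding m_def by auto
    moreover have "\<bar>p$1 - q$1\<bar> \<le> s" using p1 q1 by auto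
    ultimately have "dist p q \<le> s + (m + 1)" using dist_l1[of p q] by linarith
    moreover have "s + (m + 1) \<le> 2 * (ph s q - ph s p) + 1" by (rule aux_lin[OF dd sm])
    ultimately show ?thesis by linarith
  qed
qed

lemma ph_bounds:
  fixes p :: "real^2"
  assumes n1: "1 \<le> n" and p: "\<And>k. 0 \<le> p$k \<and> p$k \<le> sqrt (real n)"
  shows "0 \<le> ph (sqrt (real n)) p" "ph (sqrt (real n)) p \<le> 3 * real n"
proof -
  let ?s = "sqrt (real n)"
  have s0: "0 \<le> ?s" by simp
  have f0: "0 \<le> floor (p$2)" using p by auto
  have f1: "of_int (floor (p$2)) \<le> ?s" using p[of 2] by linarith
  show "0 \<le> ph ?s p" unfolding ph_def using f0 p[of 1] by simp
  have "2 * ?s * of_int (floor (p$2)) \<le> 2 * ?s * ?s" using f1 s0 by (intro mult_left_mono) auto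
  also have "\<dots> = 2 * real n" by simp
  finally have a: "2 * ?s * of_int (floor (p$2)) \<le> 2 * real n" .
  have s1: "1 \<le> ?s" using n1 by simp
  have "?s * 1 \<le> ?s * ?s" using s1 by (intro mult_left_mono) auto
  then have "?s \<le> real n" by simp
  then show "ph ?s p \<le> 3 * real n" unfolding ph_def using a p[of 1] by linarith
qed

lemma telescope_le:
  fixes g :: "nat \<Rightarrow> real"
  assumes "\<And>a. g a \<le> g (Suc a)" "\<And>a. 0 \<le> g a" "\<And>a. g a \<le> R"
  shows "(\<Sum>a<m. g (a + d) - g a) \<le> real d * R"
  using assms
proof (induction d arbitrary: g)
  case 0 then show ?case by simp
next
  case (Suc d)
  have "(\<Sum>a<m. g (a + Suc d) - g a) = (\<Sum>a<m. (g \<circ> Suc) (a + d) - (g \<circ> Suc) a) + (\<Sum>a<m. g (Suc a) - g a)"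
    by (simp add: sum.distrib[symmetric])
  also have "(\<Sum>a<m. g (Suc a) - g a) = g m - g 0" by (rule sum_lessThan_telescope)
  also have "(\<Sum>a<m. (g \<circ> Suc) (a + d) - (g \<circ> Suc) a) \<le> real d * R"
    by (rule Suc.IH) (use Suc.prems in auto)
  finally show ?case using Suc.prems(2)[of 0] Suc.prems(3)[of m] by (simp add: algebra_simps)
qed

definition edg :: "nat list \<Rightarrow> nat \<times> nat \<Rightarrow> nat \<times> nat" where
  "edg xs q = (min (xs ! fst q) (xs ! snd q), max (xs ! fst q) (xs ! snd q))"

definition pos :: "nat \<Rightarrow> (nat \<times> nat) set" where
  "pos n = {(a,b). a < b \<and> b < n}"

lemma edg_cg:
  assumes "distinct xs" "set xs = {0..<n}" "Q \<subseteq> pos n"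
  shows "edg xs ` Q \<subseteq> cg_edges n"
proof
  fix e assume "e \<in> edg xs ` Q"
  then obtain a b where ab: "(a,b) \<in> Q" "e = edg xs (a,b)" by auto
  have len: "length xs = n" using assms(1,2) using distinct_card[OF assms(1)] assms(2) by simp
  have "a < b" "b < n" using ab assms(3) by (auto simp: pos_def)
  then have "xs ! a \<noteq> xs ! b" "xs ! a < n" "xs ! b < n"
    using assms len nth_eq_iff_index_eq[of xs a b] nth_mem[of a xs] nth_mem[of b xs] by auto
  then show "e \<in> cg_edges n" using ab by (auto simp: edg_def cg_edges_def min_def max_def)
qed

lemma edg_inj:
  assumes "distinct xs" "set xs = {0..<n}" "p \<in> pos n" "p' \<in> pos n" "edg xs p = edg xs p'"
  shows "p = p'"
proof -
  have len: "length xs = n" using assms(1,2) using distinct_card[OF assms(1)] assms(2) by simp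
  obtain a b a' b' where p: "p = (a,b)" "p' = (a',b')" by force
  have r: "a < b" "b < n" "a' < b'" "b' < n" using assms(3,4) p by (auto simp: pos_def)
  have "{xs!a, xs!b} = {xs!a', xs!b'}" using assms(5) p
    by (auto simp: edg_def min_def max_def split: if_splits)
  then have "{a,b} = {a',b'}"
    using nth_eq_iff_index_eq[OF assms(1)] r len by (auto simp: doubleton_eq_iff)
  then show ?thesis using p r by (auto simp: doubleton_eq_iff)
qed

lemma edg_len:
  assumes "finite Q"
  shows "tree_len x (edg xs ` Q) \<le> (\<Sum>q\<in>Q. dist (x (xs ! fst q)) (x (xs ! snd q)))"
proof -
  have "tree_len x (edg xs ` Q) \<le> (\<Sum>q\<in>Q. ((\<lambda>(i,j). dist (x i) (x j)) \<circ> edg xs) q)"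
    unfolding tree_len_def by (rule sum_image_le) (use assms in \<open>auto simp: edg_def split: prod.splits\<close>)
  also have "\<dots> = (\<Sum>q\<in>Q. dist (x (xs ! fst q)) (x (xs ! snd q)))"
    by (intro sum.cong) (auto simp: edg_def min_def max_def dist_commute)
  finally show ?thesis .
qed

lemma edg_connected:
  assumes "distinct xs" "set xs = {0..<n}" "Q \<subseteq> pos n" "n \<ge> 1"
    and reach: "\<And>a. a < n \<Longrightarrow> (0,a) \<in> (Q \<union> Q\<inverse>)\<^sup>*"
  shows "graph_connected n (edg xs ` Q)"
proof -
  let ?E = "edg xs ` Q"
  have len: "length xs = n" using assms(1,2) using distinct_card[OF assms(1)] assms(2) by simp
  have map: "(xs!a, xs!b) \<in> (?E \<union> ?E\<inverse>)\<^sup>*" if "(a,b) \<in> (Q \<union> Q\<inverse>)\<^sup>*" for a b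
    using that
  proof (induction rule: rtrancl_induct)
    case base then show ?case by simp
  next
    case (step y z)
    have "(xs!y, xs!z) \<in> ?E \<union> ?E\<inverse>"
    proof (cases "(y,z) \<in> Q")
      case True
      then have "edg xs (y,z) \<in> ?E" by auto
      then show ?thesis by (auto simp: edg_def min_def max_def split: if_splits)
    next
      case False
      then have "(z,y) \<in> Q" using step.hyps(2) by auto
      then have "edg xs (z,y) \<in> ?E" by auto
      then show ?thesis by (auto simp: edg_def min_def max_def split: if_splits)
    qed
    then show ?case using step.IH by (meson rtrancl.rtrancl_into_rtrancl)
  qed
  show ?thesis unfolding graph_connected_def
  proof (intro allI impI)
    fix i j assume ij: "i < n" "j < n"
    then obtain a b where ab: "a < n" "b < n" "i = xs!a" "j = xs!b"
      using assms(2) len by (metis atLeast0LessThan in_set_conv_nth lessThan_iff)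
    have "(0,a) \<in> (Q \<union> Q\<inverse>)\<^sup>*" using reach ab by auto
    then have "(a,0) \<in> (Q \<union> Q\<inverse>)\<^sup>*" by (rule sym_reach)
    moreover have "(0,b) \<in> (Q \<union> Q\<inverse>)\<^sup>*" using reach ab by auto
    ultimately have "(a,b) \<in> (Q \<union> Q\<inverse>)\<^sup>*" by (rule rtrancl_trans)
    then show "(i,j) \<in> (?E \<union> ?E\<inverse>)\<^sup>*" using map ab by simp
  qed
qed

definition Q1 :: "nat \<Rightarrow> (nat \<times> nat) set" where
  "Q1 n = (\<lambda>a. (a, a+1)) ` {..<n-1}"
definition Q2 :: "nat \<Rightarrow> (nat \<times> nat) set" where
  "Q2 n = (\<lambda>a. (a, a+2)) ` {..<n-2} \<union> {(0,5)}"
definition Q3 :: "nat \<Rightarrow> (nat \<times> nat) set" where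
  "Q3 n = (\<lambda>a. (a, a+3)) ` {..<n-3} \<union> {(0,4),(1,5)}"

lemma Q1_pos: "Q1 n \<subseteq> pos n" by (auto simp: Q1_def pos_def)
lemma Q2_pos: "n \<ge> 6 \<Longrightarrow> Q2 n \<subseteq> pos n" by (auto simp: Q2_def pos_def)
lemma Q3_pos: "n \<ge> 6 \<Longrightarrow> Q3 n \<subseteq> pos n" by (auto simp: Q3_def pos_def)

lemma Q_disj: "Q1 n \<inter> Q2 n = {}" "Q1 n \<inter> Q3 n = {}" "Q2 n \<inter> Q3 n = {}"
  by (auto simp: Q1_def Q2_def Q3_def)

lemma Q1_reach: "a < n \<Longrightarrow> (0,a) \<in> (Q1 n \<union> (Q1 n)\<inverse>)\<^sup>*"
proof (induction a)
  case 0 then show ?case by simp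
next
  case (Suc a)
  then have "(a, Suc a) \<in> Q1 n" by (auto simp: Q1_def)
  then show ?case using Suc by (meson UnI1 Suc_lessD rtrancl.rtrancl_into_rtrancl)
qed

lemma Q2_reach: assumes "n \<ge> 6" shows "a < n \<Longrightarrow> (0,a) \<in> (Q2 n \<union> (Q2 n)\<inverse>)\<^sup>*"
proof (induction a rule: less_induct)
  case (less a)
  let ?R = "Q2 n \<union> (Q2 n)\<inverse>"
  show ?case
  proof (cases "a \<ge> 2")
    case True
    then have "(a-2, a) \<in> ?R" using less.prems by (auto simp: Q2_def image_iff intro!: bexI[of _ "a-2"])
    moreover have "(0, a-2) \<in> ?R\<^sup>*" using less True by auto
    ultimately show ?thesis by (meson rtrancl.rtrancl_into_rtrancl)
  next
    case False
    then consider "a = 0" | "a = 1" by linarith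
    then show ?thesis
    proof cases
      case 1 then show ?thesis by simp
    next
      case 2
      have "(0,5) \<in> ?R" "(5,3) \<in> ?R" "(3,1) \<in> ?R" using assms
        by (auto simp: Q2_def image_iff intro: bexI[of _ 3] bexI[of _ 1])
      then show ?thesis using 2 by (meson rtrancl.rtrancl_into_rtrancl rtrancl.rtrancl_refl)
    qed
  qed
qed

lemma Q3_reach: assumes "n \<ge> 6" shows "a < n \<Longrightarrow> (0,a) \<in> (Q3 n \<union> (Q3 n)\<inverse>)\<^sup>*"
proof (induction a rule: less_induct)
  case (less a)
  let ?R = "Q3 n \<union> (Q3 n)\<inverse>"
  have e: "(0,4) \<in> ?R" "(4,1) \<in> ?R" "(1,5) \<in> ?R" "(5,2) \<in> ?R" using assms
    by (auto simp: Q3_def image_iff intro: bexI[of _ 1] bexI[of _ 2])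
  show ?case
  proof (cases "a \<ge> 3")
    case True
    then have "(a-3, a) \<in> ?R" using less.prems by (auto simp: Q3_def image_iff intro!: bexI[of _ "a-3"])
    moreover have "(0, a-3) \<in> ?R\<^sup>*" using less True by auto
    ultimately show ?thesis by (meson rtrancl.rtrancl_into_rtrancl)
  next
    case False
    then consider "a = 0" | "a = 1" | "a = 2" by linarith
    then show ?thesis
    proof cases
      case 1 then show ?thesis by simp
    next
      case 2
      then show ?thesis using e by (meson rtrancl.rtrancl_into_rtrancl rtrancl.rtrancl_refl)
    next
      case 3
      then show ?thesis using e by (meson rtrancl.rtrancl_into_rtrancl rtrancl.rtrancl_refl)
    qed
  qed
qed

lemma AE_square:
  assumes "n \<ge> 1"
  shows "AE x in unif_points n. in_square n x"
proof -
  define C where "C = cbox (0::real^2) (\<chi> k. sqrt (real n))"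
  have Cs: "C \<in> sets lborel" unfolding C_def by simp
  have fin: "emeasure lborel C \<noteq> \<top>" unfolding C_def using emeasure_lborel_cbox_finite[of 0 "\<chi> k. sqrt (real n)"] by (simp add: less_top)
  have "(0::real^2) \<in> C" unfolding C_def by (simp add: mem_box_cart)
  then have ne: "C \<noteq> {}" by blast
  have ct: "measure lborel C = real n"
    unfolding C_def using ne[unfolded C_def] by (simp add: content_cbox_cart UNIV_2)
  have em: "emeasure lborel C = ennreal (real n)"
    using emeasure_eq_ennreal_measure[OF fin] ct by simp
  have ps: "prob_space (uniform_measure lborel C)"
    by (rule prob_space_uniform_measure) (use em assms in auto)
  have "AE x in unif_points n. \<forall>i\<in>{0..<n}. x i \<in> C"
    unfolding unif_points_def C_def[symmetric]
  proof (rule eventually_ball_finite)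
    show "finite {0..<n}" by simp
    show "\<forall>i\<in>{0..<n}. AE x in PiM {0..<n} (\<lambda>_. uniform_measure lborel C). x i \<in> C"
    proof
      fix i assume i: "i \<in> {0..<n}"
      show "AE x in PiM {0..<n} (\<lambda>_. uniform_measure lborel C). x i \<in> C"
        by (rule AE_PiM_component[where P="\<lambda>y. y \<in> C"]) (use ps i Cs in \<open>auto intro: AE_uniform_measureI\<close>)
    qed
  qed
  then show ?thesis
    by (rule eventually_mono) (auto simp: in_square_def C_def mem_box_cart)
qed

lemma sum_Un_le_nonneg:
  fixes f :: "'a \<Rightarrow> real"
  assumes "finite A" "finite B" "\<And>x. 0 \<le> f x"
  shows "sum f (A \<union> B) \<le> sum f A + sum f B"
proof -
  have "0 \<le> sum f (A \<inter> B)" by (rule sum_nonneg) (rule assms(3))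
  then show ?thesis using sum_Un[OF assms(1,2), of f] by linarith
qed

lemma det:
  assumes sq: "in_square n x" and n1: "n \<ge> 1"
  obtains xs where "distinct xs" "set xs = {0..<n}"
    "tree_len x (edg xs ` Q1 n) \<le> 7 * real n"
    "n \<ge> 6 \<Longrightarrow> tree_len x (edg xs ` Q2 n) \<le> 84 * real n"
    "n \<ge> 6 \<Longrightarrow> tree_len x (edg xs ` Q3 n) \<le> 84 * real n"
proof -
  define s where "s = sqrt (real n)"
  define f where "f i = ph s (x i)" for i
  define xs where "xs = sort_key f [0..<n]"
  have dist: "distinct xs" and set: "set xs = {0..<n}" by (simp_all add: xs_def)
  have len: "length xs = n" using distinct_card[OF dist] set by simp
  have sorted: "sorted (map f xs)" by (simp add: xs_def)
  have s1: "1 \<le> s" unfolding s_def using n1 by simp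
  have pt: "\<And>k. 0 \<le> x i $ k \<and> x i $ k \<le> s" if "i < n" for i
    using sq that unfolding in_square_def s_def by blast
  have xsn: "xs ! a < n" if "a < n" for a
    using nth_mem[of a xs] len set that by auto
  define g where "g a = f (xs ! min a (n-1))" for a
  have gmono: "g a \<le> g (Suc a)" for a
  proof -
    have "(map f xs) ! (min a (n-1)) \<le> (map f xs) ! (min (Suc a) (n-1))"
      by (rule sorted_nth_mono[OF sorted]) (use len n1 in auto)
    then show ?thesis unfolding g_def using len n1 by simp
  qed
  have gb: "0 \<le> g a \<and> g a \<le> 3 * real n" for a
  proof -
    have "xs ! min a (n-1) < n" using xsn n1 by simp
    then show ?thesis unfolding g_def f_def s_def using ph_bounds[OF n1] pt[unfolded s_def] by blast
  qed
  have pd: "dist (x (xs!a)) (x (xs!b)) \<le> 2 * (g b - g a) + 1" if ab: "a \<le> b" "b < n" for a b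
  proof -
    have "min a (n-1) = a" "min b (n-1) = b" using ab by auto
    then have ga: "g a = f (xs ! a)" "g b = f (xs ! b)" unfolding g_def by simp_all
    have "(map f xs) ! a \<le> (map f xs) ! b" by (rule sorted_nth_mono[OF sorted]) (use ab len in auto)
    then have "f (xs!a) \<le> f (xs!b)" using ab len by simp
    then show ?thesis unfolding ga f_def
      by (intro ph_dist[OF s1]) (use pt xsn ab in auto)
  qed
  define D where "D q = dist (x (xs ! fst q)) (x (xs ! snd q))" for q
  have D0: "0 \<le> D q" for q by (simp add: D_def)
  have sumd: "(\<Sum>a<n-d. D (a, a+d)) \<le> 6 * real d * real n + real n" for d
  proof -
    have "(\<Sum>a<n-d. D (a, a+d)) \<le> (\<Sum>a<n-d. 2 * (g (a+d) - g a) + 1)"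
    proof (rule sum_mono)
      fix a assume "a \<in> {..<n-d}"
      then have "a \<le> a + d" "a + d < n" by auto
      then show "D (a, a+d) \<le> 2 * (g (a+d) - g a) + 1" unfolding D_def using pd by simp
    qed
    also have "\<dots> = 2 * (\<Sum>a<n-d. g (a+d) - g a) + real (n - d)"
      by (simp add: sum.distrib sum_distrib_left)
    also have "(\<Sum>a<n-d. g (a+d) - g a) \<le> real d * (3 * real n)"
      by (rule telescope_le) (use gmono gb in auto)
    finally show ?thesis by simp
  qed
  have conn: "D (a,b) \<le> 6 * real n + 1" if "a < b" "b < n" for a b
    using pd[of a b] gb[of a] gb[of b] that by (simp add: D_def)
  have L: "tree_len x (edg xs ` Q) \<le> sum D Q" if "finite Q" for Q
    unfolding D_def by (rule edg_len[OF that])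
  have img: "sum D ((\<lambda>a. (a, a+d)) ` {..<n-d}) \<le> 6 * real d * real n + real n" for d
  proof -
    have "sum D ((\<lambda>a. (a, a+d)) ` {..<n-d}) \<le> sum (D \<circ> (\<lambda>a. (a, a+d))) {..<n-d}"
      by (rule sum_image_le) (auto simp: D0)
    then show ?thesis using sumd[of d] by simp
  qed
  show ?thesis
  proof (rule that[OF dist set])
    have "tree_len x (edg xs ` Q1 n) \<le> sum D (Q1 n)" by (rule L) (simp add: Q1_def)
    also have "\<dots> \<le> 6 * real 1 * real n + real n" unfolding Q1_def by (rule img)
    finally show "tree_len x (edg xs ` Q1 n) \<le> 7 * real n" by simp
  next
    assume n6: "n \<ge> 6"
    have "tree_len x (edg xs ` Q2 n) \<le> sum D (Q2 n)" by (rule L) (simp add: Q2_def)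
    also have "\<dots> \<le> sum D ((\<lambda>a. (a, a+2)) ` {..<n-2}) + sum D {(0,5)}"
      unfolding Q2_def by (rule sum_Un_le_nonneg) (auto simp: D0)
    also have "\<dots> \<le> (6 * real 2 * real n + real n) + (6 * real n + 1)"
      using img[of 2] conn[of 0 5] n6 by simp
    finally show "tree_len x (edg xs ` Q2 n) \<le> 84 * real n" using n6 by simp
  next
    assume n6: "n \<ge> 6"
    have "tree_len x (edg xs ` Q3 n) \<le> sum D (Q3 n)" by (rule L) (simp add: Q3_def)
    also have "\<dots> \<le> sum D ((\<lambda>a. (a, a+3)) ` {..<n-3}) + sum D {(0,4),(1,5)}"
      unfolding Q3_def by (rule sum_Un_le_nonneg) (auto simp: D0)
    also have "\<dots> \<le> (6 * real 3 * real n + real n) + ((6 * real n + 1) + (6 * real n + 1))"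
      using img[of 3] conn[of 0 4] conn[of 1 5] n6 by simp
    finally show "tree_len x (edg xs ` Q3 n) \<le> 84 * real n" using n6 by simp
  qed
qed

lemma tree_len_mono:
  assumes "finite E" "S \<subseteq> E"
  shows "tree_len x S \<le> tree_len x E"
  unfolding tree_len_def by (rule sum_mono2[OF assms]) auto

lemma card_split: "finite A \<Longrightarrow> card A = card (A - B) + card (A \<inter> B)"
  by (metis Int_Diff_disjoint Un_Diff_Int card_Un_disjoint finite_Diff finite_Int inf_commute)

lemma pick:
  assumes t1: "spanning_tree n S1" and t2: "spanning_tree n S2" and t3: "spanning_tree n S3"
    and d: "S1 \<inter> S2 = {}" "S1 \<inter> S3 = {}" "S2 \<inter> S3 = {}"
    and tT: "spanning_tree n T" and n4: "n \<ge> 4"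
  shows "n \<le> 2 * card (S1 - T) \<or> n \<le> 2 * card (S2 - T) \<or> n \<le> 2 * card (S3 - T)"
proof -
  have fin: "finite S1" "finite S2" "finite S3" "finite T"
    using t1 t2 t3 tT cg_edges_finite finite_subset unfolding spanning_tree_def by blast+
  have c1: "n - 1 \<le> card S1" using t1 n4 connected_card unfolding spanning_tree_def by auto
  have c2: "n - 1 \<le> card S2" using t2 n4 connected_card unfolding spanning_tree_def by auto
  have c3: "n - 1 \<le> card S3" using t3 n4 connected_card unfolding spanning_tree_def by auto
  have cT: "card T \<le> n - 1" using tree_card tT n4 by auto
  have "card ((S1 \<inter> T) \<union> (S2 \<inter> T) \<union> (S3 \<inter> T)) = card (S1 \<inter> T) + card (S2 \<inter> T) + card (S3 \<inter> T)"
    using fin d by (subst card_Un_disjoint; auto)+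
  moreover have "card ((S1 \<inter> T) \<union> (S2 \<inter> T) \<union> (S3 \<inter> T)) \<le> card T"
    using fin by (intro card_mono) auto
  ultimately have sum: "card (S1 \<inter> T) + card (S2 \<inter> T) + card (S3 \<inter> T) \<le> n - 1" using cT by simp
  have "card S1 = card (S1 - T) + card (S1 \<inter> T)" "card S2 = card (S2 - T) + card (S2 \<inter> T)"
    "card S3 = card (S3 - T) + card (S3 \<inter> T)" using fin card_split by blast+
  then show ?thesis using sum c1 c2 c3 n4 by linarith
qed

lemma detB:
  assumes sq: "in_square n x" and n6: "n \<ge> 6" and mst: "is_MST n x T"
  shows "\<exists>T''. spanning_tree n T'' \<and> tree_len x T'' \<le> 12 * 7 * real n \<and>
               real (card (T'' - T)) / real n \<ge> 1/2"
proof -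
  have n1: "n \<ge> 1" using n6 by simp
  obtain xs where dist: "distinct xs" and set: "set xs = {0..<n}"
    and l1: "tree_len x (edg xs ` Q1 n) \<le> 7 * real n"
    and l2': "n \<ge> 6 \<Longrightarrow> tree_len x (edg xs ` Q2 n) \<le> 84 * real n"
    and l3': "n \<ge> 6 \<Longrightarrow> tree_len x (edg xs ` Q3 n) \<le> 84 * real n"
    using det[OF sq n1] by blast
  have l2: "tree_len x (edg xs ` Q2 n) \<le> 84 * real n" by (rule l2'[OF n6])
  have l3: "tree_len x (edg xs ` Q3 n) \<le> 84 * real n" by (rule l3'[OF n6])
  have fp: "finite (pos n)" by (rule finite_subset[of _ "{..<n} \<times> {..<n}"]) (auto simp: pos_def)
  have sub: "\<And>Q. Q \<subseteq> pos n \<Longrightarrow> finite Q \<and> edg xs ` Q \<subseteq> cg_edges n"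
    using edg_cg[OF dist set] finite_subset fp by blast
  have ex: "\<exists>S. S \<subseteq> edg xs ` Q \<and> spanning_tree n S \<and> tree_len x S \<le> 84 * real n"
    if Q: "Q \<subseteq> pos n" "\<And>a. a < n \<Longrightarrow> (0,a) \<in> (Q \<union> Q\<inverse>)\<^sup>*" "tree_len x (edg xs ` Q) \<le> 84 * real n" for Q
  proof -
    have fQ: "finite (edg xs ` Q)" "edg xs ` Q \<subseteq> cg_edges n" using sub[OF Q(1)] by auto
    have "graph_connected n (edg xs ` Q)" by (rule edg_connected[OF dist set Q(1) n1 Q(2)])
    from exists_subtree[OF fQ this] obtain S where S: "S \<subseteq> edg xs ` Q" "spanning_tree n S" by blast
    have "tree_len x S \<le> tree_len x (edg xs ` Q)" by (rule tree_len_mono[OF fQ(1) S(1)])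
    then have "tree_len x S \<le> 84 * real n" using Q(3) by linarith
    then show ?thesis using S by blast
  qed
  have l1': "tree_len x (edg xs ` Q1 n) \<le> 84 * real n" using l1 by simp
  obtain S1 where S1: "S1 \<subseteq> edg xs ` Q1 n" "spanning_tree n S1" "tree_len x S1 \<le> 84 * real n"
    using ex[OF Q1_pos Q1_reach l1'] by blast
  obtain S2 where S2: "S2 \<subseteq> edg xs ` Q2 n" "spanning_tree n S2" "tree_len x S2 \<le> 84 * real n"
    using ex[OF Q2_pos[OF n6] Q2_reach[OF n6] l2] by blast
  obtain S3 where S3: "S3 \<subseteq> edg xs ` Q3 n" "spanning_tree n S3" "tree_len x S3 \<le> 84 * real n"
    using ex[OF Q3_pos[OF n6] Q3_reach[OF n6] l3] by blast
  have disj: "edg xs ` A \<inter> edg xs ` B = {}" if "A \<subseteq> pos n" "B \<subseteq> pos n" "A \<inter> B = {}" for A B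
  proof (rule ccontr)
    assume "edg xs ` A \<inter> edg xs ` B \<noteq> {}"
    then obtain e where "e \<in> edg xs ` A" "e \<in> edg xs ` B" by blast
    then obtain p p' where p: "p \<in> A" "p' \<in> B" "edg xs p = edg xs p'"
      by (metis imageE)
    then have "p = p'" using edg_inj[OF dist set] that by blast
    then show False using p that by blast
  qed
  have e12: "edg xs ` Q1 n \<inter> edg xs ` Q2 n = {}" by (rule disj[OF Q1_pos Q2_pos[OF n6] Q_disj(1)])
  have e13: "edg xs ` Q1 n \<inter> edg xs ` Q3 n = {}" by (rule disj[OF Q1_pos Q3_pos[OF n6] Q_disj(2)])
  have e23: "edg xs ` Q2 n \<inter> edg xs ` Q3 n = {}" by (rule disj[OF Q2_pos[OF n6] Q3_pos[OF n6] Q_disj(3)])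
  have d1: "S1 \<inter> S2 = {}" using S1(1) S2(1) e12 by blast
  have d2: "S1 \<inter> S3 = {}" using S1(1) S3(1) e13 by blast
  have d3: "S2 \<inter> S3 = {}" using S2(1) S3(1) e23 by blast
  note d = d1 d2 d3
  have tT: "spanning_tree n T" using mst unfolding is_MST_def by blast
  have half: "real (card (S - T)) / real n \<ge> 1/2" if "n \<le> 2 * card (S - T)" for S
  proof -
    have "real n \<le> 2 * real (card (S - T))" using that by linarith
    then show ?thesis using n1 by (simp add: field_simps)
  qed
  from pick[OF S1(2) S2(2) S3(2) d tT] n6 consider
    "n \<le> 2 * card (S1 - T)" | "n \<le> 2 * card (S2 - T)" | "n \<le> 2 * card (S3 - T)" by linarith
  then show ?thesis
  proof cases
    case 1 then show ?thesis using S1 half by (intro exI[of _ S1]) auto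
  next
    case 2 then show ?thesis using S2 half by (intro exI[of _ S2]) auto
  next
    case 3 then show ?thesis using S3 half by (intro exI[of _ S3]) auto
  qed
qed

lemma detA:
  assumes sq: "in_square n x" and mst: "is_MST n x T"
  shows "tree_len x T \<le> 7 * real n"
proof (cases "n = 0")
  case True
  have "T \<subseteq> cg_edges n" using mst by (simp add: is_MST_def spanning_tree_def)
  then have "T = {}" using True by (simp add: cg_edges_def)
  then show ?thesis by (simp add: tree_len_def)
next
  case False
  then have n1: "n \<ge> 1" by simp
  obtain xs where dist: "distinct xs" and set: "set xs = {0..<n}"
    and l1: "tree_len x (edg xs ` Q1 n) \<le> 7 * real n"
    and "n \<ge> 6 \<Longrightarrow> tree_len x (edg xs ` Q2 n) \<le> 84 * real n"
    and "n \<ge> 6 \<Longrightarrow> tree_len x (edg xs ` Q3 n) \<le> 84 * real n"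
    using det[OF sq n1] by blast
  have fQ: "finite (edg xs ` Q1 n)" by (simp add: Q1_def)
  have cg: "edg xs ` Q1 n \<subseteq> cg_edges n" by (rule edg_cg[OF dist set Q1_pos])
  have "graph_connected n (edg xs ` Q1 n)" by (rule edg_connected[OF dist set Q1_pos n1 Q1_reach])
  from exists_subtree[OF fQ cg this] obtain S where S: "S \<subseteq> edg xs ` Q1 n" "spanning_tree n S" by blast
  have "tree_len x T \<le> tree_len x S" using mst S(2) by (simp add: is_MST_def)
  also have "\<dots> \<le> tree_len x (edg xs ` Q1 n)" by (rule tree_len_mono[OF fQ S(1)])
  finally show ?thesis using l1 by simp
qed

theorem mainTheorem3:
  shows "\<exists>c1::real.
    (\<forall>n x T. in_square n x \<and> is_MST n x T \<longrightarrow> tree_len x T \<le> c1 * real n) \<and>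
    (\<exists>N. \<forall>n\<ge>N. AE x in unif_points n. \<forall>T. is_MST n x T \<longrightarrow>
        (\<exists>T''. spanning_tree n T'' \<and> tree_len x T'' \<le> 12 * c1 * real n \<and>
               real (card (T'' - T)) / real n \<ge> 1/2))"
proof (rule exI[of _ "7::real"], rule conjI)
  show "\<forall>n x T. in_square n x \<and> is_MST n x T \<longrightarrow> tree_len x T \<le> 7 * real n"
    using detA by blast
  show "\<exists>N. \<forall>n\<ge>N. AE x in unif_points n. \<forall>T. is_MST n x T \<longrightarrow>
        (\<exists>T''. spanning_tree n T'' \<and> tree_len x T'' \<le> 12 * 7 * real n \<and>
               real (card (T'' - T)) / real n \<ge> 1/2)"
  proof (intro exI[of _ 6] allI impI)
    fix n :: nat assume n6: "6 \<le> n"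
    have "AE x in unif_points n. in_square n x" by (rule AE_square) (use n6 in simp)
    then show "AE x in unif_points n. \<forall>T. is_MST n x T \<longrightarrow>
        (\<exists>T''. spanning_tree n T'' \<and> tree_len x T'' \<le> 12 * 7 * real n \<and>
               real (card (T'' - T)) / real n \<ge> 1/2)"
      by (rule eventually_mono) (use detB n6 in blast)
  qed
qed


end
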